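(* Let $L$ be a simplicial complex and $K\subseteq L$ a subcomplex such that the relative complex $(L,K)$ has dimension $d$, i.e. $d=\max\{\dim F: F\in L\setminus K\}$. Let $\kappa:V(K)\to\{0,1,\dots,m-1\}$ be a proper $m$-coloring of $K$ (it need not be proper on edges of $L\setminus K$). Then there is a complex $L'$, obtained from $L$ by a finite sequence of stellar subdivisions, such that (1) $K$ is a subcomplex of $L'$ (no face of $K$ is subdivided), and (2) $\kappa$ extends to a proper coloring $\kappa':V(L')\to\{0,1,\dots,\max\{m-1,d\}\}$ such that every vertex of $L'$ not in $K$ receives a color in $\{0,1,\dots,d\}$.
   Context: All simplicial complexes are finite abstract simplicial complexes. For a finite set $F$, $\overline{F}$ denotes the simplex of all subsets of $F$ and $\partial\overline{F}$ the complex of proper subsets; $*$ denotes join; $\mathrm{lk}_\Delta(F)=\{G\in\Delta: F\cap G=\emptyset, F\cup G\in\Delta\}$. The stellar subdivision of $\Delta$ at a nonempty face $F$ is $\mathrm{sd}_F(\Delta)=\{G\in\Delta: F\not\subseteq G\}\cup(\overline{\{a\}}*\partial\overline{F}*\mathrm{lk}_\Delta(F))$, where $a$ is a new vertex. A proper $m$-coloring of a complex is a map from its vertex set to $\{0,\dots,m-1\}$ giving distinct colors to the endpoints of every edge. *)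

theory Defs
  imports Main
begin

definition simplicial_complex :: "'a set set \<Rightarrow> bool" where
  "simplicial_complex \<Delta> \<longleftrightarrow> finite \<Delta> \<and> (\<forall>F\<in>\<Delta>. finite F) \<and> (\<forall>F\<in>\<Delta>. \<forall>G. G \<subseteq> F \<longrightarrow> G \<in> \<Delta>)"

definition vertices :: "'a set set \<Rightarrow> 'a set" where
  "vertices \<Delta> = \<Union>\<Delta>"

definition link :: "'a set set \<Rightarrow> 'a set \<Rightarrow> 'a set set" where
  "link \<Delta> F = {G \<in> \<Delta>. F \<inter> G = {} \<and> F \<union> G \<in> \<Delta>}"

text \<open>Stellar subdivision of \<Delta> at face F with new vertex a:
  {G \<in> \<Delta>. F not a subset of G} \<union> (simplex{a} * boundary(F) * lk(F)).\<close>
definition stellar_subdivision :: "'a set set \<Rightarrow> 'a set \<Rightarrow> 'a \<Rightarrow> 'a set set" where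
  "stellar_subdivision \<Delta> F a =
     {G \<in> \<Delta>. \<not> F \<subseteq> G} \<union>
     {A \<union> H \<union> G | A H G. A \<subseteq> {a} \<and> H \<subset> F \<and> G \<in> link \<Delta> F}"

definition stellar_step :: "'a set set \<Rightarrow> 'a set set \<Rightarrow> bool" where
  "stellar_step \<Delta> \<Delta>' \<longleftrightarrow>
     (\<exists>F a. F \<in> \<Delta> \<and> F \<noteq> {} \<and> a \<notin> vertices \<Delta> \<and> \<Delta>' = stellar_subdivision \<Delta> F a)"

definition proper_coloring_on :: "'a set set \<Rightarrow> ('a \<Rightarrow> nat) \<Rightarrow> bool" where
  "proper_coloring_on \<Delta> c \<longleftrightarrow> (\<forall>u v. {u, v} \<in> \<Delta> \<longrightarrow> u \<noteq> v \<longrightarrow> c u \<noteq> c v)"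

definition proper_m_coloring :: "'a set set \<Rightarrow> nat \<Rightarrow> ('a \<Rightarrow> nat) \<Rightarrow> bool" where
  "proper_m_coloring \<Delta> m c \<longleftrightarrow> (\<forall>v\<in>vertices \<Delta>. c v < m) \<and> proper_coloring_on \<Delta> c"

text \<open>Dimension of a face: card F - 1 (as an integer, so the empty face has dimension -1).\<close>
definition face_dim :: "'a set \<Rightarrow> int" where
  "face_dim F = int (card F) - 1"

end

theory Submission
  imports Defs
begin

definition dclosed :: "'a set set \<Rightarrow> bool" where
  "dclosed X \<longleftrightarrow> (\<forall>F\<in>X. \<forall>G. G \<subseteq> F \<longrightarrow> G \<in> X)"

definition stepA :: "'a set \<Rightarrow> 'a set set \<Rightarrow> 'a set set \<Rightarrow> bool" where
  "stepA A \<Delta> \<Delta>' \<longleftrightarrow> (\<exists>F a. F \<in> \<Delta> \<and> F \<noteq> {} \<and> a \<notin> vertices \<Delta> \<and> a \<notin> A \<and> \<Delta>' = stellar_subdivision \<Delta> F a)"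

lemma stepA_rtranclp: "(stepA A)\<^sup>*\<^sup>* x y \<Longrightarrow> stellar_step\<^sup>*\<^sup>* x y"
proof (induction rule: rtranclp_induct)
  case base then show ?case by simp
next
  case (step y z)
  have "stellar_step y z" using step(2) unfolding stepA_def stellar_step_def by blast
  then show ?case using step(3) by (meson rtranclp.rtrancl_into_rtrancl)
qed

lemma sd_dclosed:
  assumes "dclosed \<Delta>"
  shows "dclosed (stellar_subdivision \<Delta> F a)"
  unfolding dclosed_def
proof (intro ballI allI impI)
  fix X S assume X: "X \<in> stellar_subdivision \<Delta> F a" and S: "S \<subseteq> X"
  show "S \<in> stellar_subdivision \<Delta> F a"
  proof (cases "X \<in> \<Delta> \<and> \<not> F \<subseteq> X")
    case True
    then have "S \<in> \<Delta>" "\<not> F \<subseteq> S" using assms S unfolding dclosed_def by auto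
    then show ?thesis unfolding stellar_subdivision_def by blast
  next
    case False
    then obtain A H G where X': "X = A \<union> H \<union> G" "A \<subseteq> {a}" "H \<subset> F" "G \<in> link \<Delta> F"
      using X unfolding stellar_subdivision_def by blast
    have G: "G \<in> \<Delta>" "F \<inter> G = {}" "F \<union> G \<in> \<Delta>" using X'(4) unfolding link_def by auto
    have "S \<inter> G \<in> link \<Delta> F"
    proof -
      have "S \<inter> G \<in> \<Delta>" using G(1) assms unfolding dclosed_def by blast
      moreover have "F \<union> (S \<inter> G) \<in> \<Delta>" using G(3) assms unfolding dclosed_def
        by (meson Int_lower2 Un_mono order_refl)
      ultimately show ?thesis unfolding link_def using G(2) by blast
    qed
    moreover have "S \<inter> H \<subset> F" using X'(3) by blast
    moreover have "S \<inter> A \<subseteq> {a}" using X'(2) by blast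
    moreover have "S = (S \<inter> A) \<union> (S \<inter> H) \<union> (S \<inter> G)" using S X'(1) by blast
    ultimately show ?thesis unfolding stellar_subdivision_def by blast
  qed
qed

lemma sd_simplicial:
  assumes "simplicial_complex \<Delta>" "F \<in> \<Delta>"
  shows "simplicial_complex (stellar_subdivision \<Delta> F a)"
proof -
  have fin: "finite \<Delta>" "\<forall>F\<in>\<Delta>. finite F" and dc: "dclosed \<Delta>"
    using assms(1) unfolding simplicial_complex_def dclosed_def by auto
  have fF: "finite F" using fin assms(2) by auto
  have lk: "link \<Delta> F \<subseteq> \<Delta>" unfolding link_def by auto
  have "{A \<union> H \<union> G | A H G. A \<subseteq> {a} \<and> H \<subset> F \<and> G \<in> link \<Delta> F}
        \<subseteq> (\<lambda>(A,H,G). A \<union> H \<union> G) ` (Pow {a} \<times> Pow F \<times> link \<Delta> F)"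
  proof
    fix X assume "X \<in> {A \<union> H \<union> G | A H G. A \<subseteq> {a} \<and> H \<subset> F \<and> G \<in> link \<Delta> F}"
    then obtain A H G where "X = A \<union> H \<union> G" "A \<subseteq> {a}" "H \<subset> F" "G \<in> link \<Delta> F" by blast
    then show "X \<in> (\<lambda>(A,H,G). A \<union> H \<union> G) ` (Pow {a} \<times> Pow F \<times> link \<Delta> F)"
      by (intro rev_image_eqI[of "(A,H,G)"]) auto
  qed
  moreover have "finite (Pow {a} \<times> Pow F \<times> link \<Delta> F)"
    using fF fin lk by (simp add: finite_subset)
  ultimately have f1: "finite {A \<union> H \<union> G | A H G. A \<subseteq> {a} \<and> H \<subset> F \<and> G \<in> link \<Delta> F}"
    by (meson finite_imageI finite_subset)
  have f2: "finite {G \<in> \<Delta>. \<not> F \<subseteq> G}" using fin by auto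
  have fin1: "finite (stellar_subdivision \<Delta> F a)" unfolding stellar_subdivision_def using f1 f2 by auto
  have fin2: "\<forall>X\<in>stellar_subdivision \<Delta> F a. finite X"
  proof
    fix X assume "X \<in> stellar_subdivision \<Delta> F a"
    then consider "X \<in> \<Delta>" | A H G where "X = A \<union> H \<union> G" "A \<subseteq> {a}" "H \<subset> F" "G \<in> link \<Delta> F"
      unfolding stellar_subdivision_def by blast
    then show "finite X"
    proof cases
      case 1 then show ?thesis using fin by auto
    next
      case 2
      have "finite A" using 2(2) finite_subset by auto
      moreover have "finite H" using 2(3) fF finite_subset by auto
      moreover have "finite G" using 2(4) lk fin by auto
      ultimately show ?thesis using 2(1) by auto
    qed
  qed
  show ?thesis using fin1 fin2 sd_dclosed[OF dc] unfolding simplicial_complex_def dclosed_def by blast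
qed

lemma link_cone:
  assumes a: "a \<notin> vertices M" and XM: "X \<subseteq> M" and t: "\<tau> \<in> M"
  shows "link (M \<union> insert a ` X) \<tau> = link M \<tau> \<union> insert a ` link X \<tau>"
proof (rule set_eqI, rule iffI)
  have at: "a \<notin> \<tau>" using a t unfolding vertices_def by auto
  fix G assume G: "G \<in> link (M \<union> insert a ` X) \<tau>"
  then have G1: "G \<in> M \<union> insert a ` X" "\<tau> \<inter> G = {}" "\<tau> \<union> G \<in> M \<union> insert a ` X"
    unfolding link_def by auto
  show "G \<in> link M \<tau> \<union> insert a ` link X \<tau>"
  proof (cases "G \<in> M")
    case True
    then have "a \<notin> G" using a unfolding vertices_def by auto
    then have "\<tau> \<union> G \<notin> insert a ` X" using at by auto
    then have "\<tau> \<union> G \<in> M" using G1(3) by auto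
    then show ?thesis using True G1(2) unfolding link_def by auto
  next
    case False
    then obtain G' where G': "G = insert a G'" "G' \<in> X" using G1(1) by auto
    have aG': "a \<notin> G'" using G'(2) XM a unfolding vertices_def by auto
    have "\<tau> \<union> G \<notin> M" using a G'(1) unfolding vertices_def by auto
    then obtain S where S: "\<tau> \<union> G = insert a S" "S \<in> X" using G1(3) by auto
    have aS: "a \<notin> S" using S(2) XM a unfolding vertices_def by auto
    have "\<tau> \<union> G' = (\<tau> \<union> G) - {a}" using G'(1) aG' at by auto
    also have "\<dots> = S" using S(1) aS by auto
    finally have "\<tau> \<union> G' = S" .
    then have "G' \<in> link X \<tau>" unfolding link_def using S(2) G'(2) G1(2) G'(1) by auto
    then show ?thesis using G'(1) by auto
  qed
next
  fix G assume G: "G \<in> link M \<tau> \<union> insert a ` link X \<tau>"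
  have at: "a \<notin> \<tau>" using a t unfolding vertices_def by auto
  show "G \<in> link (M \<union> insert a ` X) \<tau>"
  proof (cases "G \<in> link M \<tau>")
    case True then show ?thesis unfolding link_def by auto
  next
    case False
    then obtain G' where G': "G = insert a G'" "G' \<in> link X \<tau>" using G by auto
    then have "G' \<in> X" "\<tau> \<inter> G' = {}" "\<tau> \<union> G' \<in> X" unfolding link_def by auto
    moreover have "\<tau> \<union> G = insert a (\<tau> \<union> G')" using G'(1) by auto
    ultimately show ?thesis unfolding link_def using G'(1) at by auto
  qed
qed

lemma sd_cone:
  assumes a: "a \<notin> vertices M" and XM: "X \<subseteq> M" and t: "\<tau> \<in> M"
  shows "stellar_subdivision (M \<union> insert a ` X) \<tau> b
       = stellar_subdivision M \<tau> b \<union> insert a ` stellar_subdivision X \<tau> b"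
proof -
  have at: "a \<notin> \<tau>" using a t unfolding vertices_def by auto
  have lk: "link (M \<union> insert a ` X) \<tau> = link M \<tau> \<union> insert a ` link X \<tau>"
    by (rule link_cone[OF a XM t])
  show ?thesis
  proof (rule set_eqI, rule iffI)
    fix S assume S: "S \<in> stellar_subdivision (M \<union> insert a ` X) \<tau> b"
    show "S \<in> stellar_subdivision M \<tau> b \<union> insert a ` stellar_subdivision X \<tau> b"
    proof (cases "S \<in> M \<union> insert a ` X \<and> \<not> \<tau> \<subseteq> S")
      case True
      show ?thesis
      proof (cases "S \<in> M")
        case True
        then show ?thesis using \<open>S \<in> M \<union> insert a ` X \<and> \<not> \<tau> \<subseteq> S\<close>
          unfolding stellar_subdivision_def by blast
      next
        case False
        then obtain S' where S': "S = insert a S'" "S' \<in> X" using True by auto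
        then have "\<not> \<tau> \<subseteq> S'" using True by auto
        then have "S' \<in> stellar_subdivision X \<tau> b"
          using S'(2) unfolding stellar_subdivision_def by blast
        then show ?thesis using S'(1) by blast
      qed
    next
      case False
      then obtain A H G where AHG: "S = A \<union> H \<union> G" "A \<subseteq> {b}" "H \<subset> \<tau>"
          "G \<in> link (M \<union> insert a ` X) \<tau>"
        using S unfolding stellar_subdivision_def by blast
      show ?thesis
      proof (cases "G \<in> link M \<tau>")
        case True
        then show ?thesis using AHG unfolding stellar_subdivision_def by blast
      next
        case False
        then obtain G' where G': "G = insert a G'" "G' \<in> link X \<tau>" using AHG(4) lk by auto
        have "A \<union> H \<union> G' \<in> stellar_subdivision X \<tau> b"
          using AHG(2,3) G'(2) unfolding stellar_subdivision_def by blast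
        moreover have "S = insert a (A \<union> H \<union> G')" using AHG(1) G'(1) by auto
        ultimately show ?thesis by blast
      qed
    qed
  next
    fix S assume S: "S \<in> stellar_subdivision M \<tau> b \<union> insert a ` stellar_subdivision X \<tau> b"
    show "S \<in> stellar_subdivision (M \<union> insert a ` X) \<tau> b"
    proof (cases "S \<in> stellar_subdivision M \<tau> b")
      case True
      then consider "S \<in> M" "\<not> \<tau> \<subseteq> S" | A H G where "S = A \<union> H \<union> G" "A \<subseteq> {b}" "H \<subset> \<tau>" "G \<in> link M \<tau>"
        unfolding stellar_subdivision_def by blast
      then show ?thesis
      proof cases
        case 1 then show ?thesis unfolding stellar_subdivision_def by blast
      next
        case 2
        then have "G \<in> link (M \<union> insert a ` X) \<tau>" using lk by auto
        then show ?thesis using 2 unfolding stellar_subdivision_def by blast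
      qed
    next
      case False
      then obtain S' where S': "S = insert a S'" "S' \<in> stellar_subdivision X \<tau> b" using S by auto
      from S'(2) consider "S' \<in> X" "\<not> \<tau> \<subseteq> S'" | A H G where "S' = A \<union> H \<union> G" "A \<subseteq> {b}" "H \<subset> \<tau>" "G \<in> link X \<tau>"
        unfolding stellar_subdivision_def by blast
      then show ?thesis
      proof cases
        case 1
        then have "S \<in> M \<union> insert a ` X" "\<not> \<tau> \<subseteq> S" using S'(1) at by auto
        then show ?thesis unfolding stellar_subdivision_def by blast
      next
        case 2
        then have "insert a G \<in> link (M \<union> insert a ` X) \<tau>" using lk by auto
        moreover have "S = A \<union> H \<union> insert a G" using 2(1) S'(1) by auto
        ultimately show ?thesis using 2(2,3) unfolding stellar_subdivision_def by blast
      qed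
    qed
  qed
qed

lemma sd_vertices:
  assumes "F \<in> \<Delta>"
  shows "vertices (stellar_subdivision \<Delta> F a) \<subseteq> insert a (vertices \<Delta>)"
proof
  fix v assume "v \<in> vertices (stellar_subdivision \<Delta> F a)"
  then obtain X where X: "v \<in> X" "X \<in> stellar_subdivision \<Delta> F a" unfolding vertices_def by auto
  from X(2) consider "X \<in> \<Delta>" | A H G where "X = A \<union> H \<union> G" "A \<subseteq> {a}" "H \<subset> F" "G \<in> link \<Delta> F"
    unfolding stellar_subdivision_def by blast
  then show "v \<in> insert a (vertices \<Delta>)"
  proof cases
    case 1 then show ?thesis using X(1) unfolding vertices_def by auto
  next
    case 2
    have "G \<in> \<Delta>" using 2(4) unfolding link_def by auto
    then show ?thesis using 2 X(1) assms unfolding vertices_def by auto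
  qed
qed

lemma sd_mono:
  assumes "X \<subseteq> M"
  shows "stellar_subdivision X \<tau> b \<subseteq> stellar_subdivision M \<tau> b"
proof -
  have "link X \<tau> \<subseteq> link M \<tau>" using assms unfolding link_def by auto
  then show ?thesis using assms unfolding stellar_subdivision_def by blast
qed

lemma sd_card_bound:
  assumes "\<forall>\<sigma>\<in>X. finite \<sigma> \<and> card \<sigma> \<le> n"
  shows "\<forall>\<sigma>\<in>stellar_subdivision X \<tau> b. finite \<sigma> \<and> card \<sigma> \<le> n"
proof
  fix S assume "S \<in> stellar_subdivision X \<tau> b"
  then consider "S \<in> X" | A H G where "S = A \<union> H \<union> G" "A \<subseteq> {b}" "H \<subset> \<tau>" "G \<in> link X \<tau>"
    unfolding stellar_subdivision_def by blast
  then show "finite S \<and> card S \<le> n"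
  proof cases
    case 1 then show ?thesis using assms by auto
  next
    case 2
    have tG: "\<tau> \<union> G \<in> X" "\<tau> \<inter> G = {}" using 2(4) unfolding link_def by auto
    then have fin: "finite (\<tau> \<union> G)" "card (\<tau> \<union> G) \<le> n" using assms by auto
    then have ft: "finite \<tau>" "finite G" by auto
    have fA1: "finite A" using 2(2) finite_subset by blast
    have "card A \<le> card {b}" using 2(2) by (intro card_mono) auto
    then have fA: "finite A" "card A \<le> 1" using fA1 by auto
    have fH: "finite H" "card H < card \<tau>" using 2(3) ft(1) by (auto intro: finite_subset psubset_card_mono)
    have "card S \<le> card A + card H + card G" unfolding 2(1)
      by (meson add_mono card_Un_le le_trans nat_le_linear order_refl)
    also have "\<dots> \<le> card \<tau> + card G" using fA fH by linarith
    also have "\<dots> = card (\<tau> \<union> G)" using ft tG(2) by (simp add: card_Un_disjoint)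
    finally show ?thesis using fin fA fH ft 2(1) by auto
  qed
qed

lemma lift_step:
  assumes st: "stepA (insert a A) M M'" and a: "a \<notin> vertices M" and XM: "X \<subseteq> M"
    and dX: "dclosed X" and bX: "\<forall>\<sigma>\<in>X. finite \<sigma> \<and> card \<sigma> \<le> n" and sM: "simplicial_complex M"
  shows "\<exists>X'. stepA A (M \<union> insert a ` X) (M' \<union> insert a ` X') \<and> X' \<subseteq> M' \<and> dclosed X'
     \<and> (\<forall>\<sigma>\<in>X'. finite \<sigma> \<and> card \<sigma> \<le> n) \<and> a \<notin> vertices M' \<and> simplicial_complex M'"
proof -
  obtain \<tau> b where tb: "\<tau> \<in> M" "\<tau> \<noteq> {}" "b \<notin> vertices M" "b \<notin> insert a A"
    "M' = stellar_subdivision M \<tau> b"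
    using st unfolding stepA_def by blast
  define X' where "X' = stellar_subdivision X \<tau> b"
  have eq: "stellar_subdivision (M \<union> insert a ` X) \<tau> b = M' \<union> insert a ` X'"
    using sd_cone[OF a XM tb(1)] tb(5) X'_def by simp
  have "vertices (M \<union> insert a ` X) \<subseteq> insert a (vertices M)"
  proof
    fix v assume "v \<in> vertices (M \<union> insert a ` X)"
    then obtain S where "v \<in> S" "S \<in> M \<union> insert a ` X" unfolding vertices_def by blast
    then show "v \<in> insert a (vertices M)" using XM unfolding vertices_def by blast
  qed
  then have "b \<notin> vertices (M \<union> insert a ` X)" using tb(3,4) by auto
  then have "stepA A (M \<union> insert a ` X) (M' \<union> insert a ` X')"
    unfolding stepA_def
  proof (intro exI conjI)
    show "\<tau> \<in> M \<union> insert a ` X" using tb(1) by blast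
    show "\<tau> \<noteq> {}" using tb(2) .
    show "b \<notin> A" using tb(4) by blast
    show "M' \<union> insert a ` X' = stellar_subdivision (M \<union> insert a ` X) \<tau> b" using eq by simp
  qed
  moreover have "X' \<subseteq> M'" using sd_mono[OF XM] tb(5) X'_def by simp
  moreover have "dclosed X'" using sd_dclosed[OF dX] X'_def by simp
  moreover have "\<forall>\<sigma>\<in>X'. finite \<sigma> \<and> card \<sigma> \<le> n" using sd_card_bound[OF bX] X'_def by simp
  moreover have "a \<notin> vertices M'" using sd_vertices[OF tb(1), of b] tb(4,5) a by auto
  moreover have "simplicial_complex M'" using sd_simplicial[OF sM tb(1)] tb(5) by simp
  ultimately show ?thesis by blast
qed

lemma lift_steps:
  assumes st: "(stepA (insert a A))\<^sup>*\<^sup>* M M'" and a: "a \<notin> vertices M" and XM: "X \<subseteq> M"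
    and dX: "dclosed X" and bX: "\<forall>\<sigma>\<in>X. finite \<sigma> \<and> card \<sigma> \<le> n" and sM: "simplicial_complex M"
  shows "\<exists>X'. (stepA A)\<^sup>*\<^sup>* (M \<union> insert a ` X) (M' \<union> insert a ` X') \<and> X' \<subseteq> M' \<and> dclosed X'
     \<and> (\<forall>\<sigma>\<in>X'. finite \<sigma> \<and> card \<sigma> \<le> n) \<and> a \<notin> vertices M' \<and> simplicial_complex M'"
  using st
proof (induction rule: rtranclp_induct)
  case base then show ?case using a XM dX bX sM by (intro exI[of _ X]) auto
next
  case (step y z)
  obtain X1 where X1: "(stepA A)\<^sup>*\<^sup>* (M \<union> insert a ` X) (y \<union> insert a ` X1)" "X1 \<subseteq> y" "dclosed X1"
     "\<forall>\<sigma>\<in>X1. finite \<sigma> \<and> card \<sigma> \<le> n" "a \<notin> vertices y" "simplicial_complex y"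
    using step.IH by blast
  from lift_step[OF step(2) X1(5) X1(2) X1(3) X1(4) X1(6)] obtain X2 where
    X2: "stepA A (y \<union> insert a ` X1) (z \<union> insert a ` X2)" "X2 \<subseteq> z" "dclosed X2"
     "\<forall>\<sigma>\<in>X2. finite \<sigma> \<and> card \<sigma> \<le> n" "a \<notin> vertices z" "simplicial_complex z" by blast
  have "(stepA A)\<^sup>*\<^sup>* (M \<union> insert a ` X) (z \<union> insert a ` X2)"
    using X1(1) X2(1) by (rule rtranclp.rtrancl_into_rtrancl)
  then show ?case using X2(2-6) by blast
qed

definition lkv :: "'a set set \<Rightarrow> 'a \<Rightarrow> 'a set set" where
  "lkv Y z = {G \<in> Y. z \<notin> G \<and> insert z G \<in> Y}"

definition Yn :: "'a set set \<Rightarrow> 'a \<Rightarrow> 'a \<Rightarrow> 'a set set" where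
  "Yn Y w z = lkv Y z \<union> insert w ` lkv Y z \<union> insert z ` lkv Y z"

locale rctx =
  fixes \<Gamma> :: "'a set set" and \<chi> :: "'a \<Rightarrow> nat" and W :: "'a set" and Y :: "'a \<Rightarrow> 'a set set"
    and c :: "'a \<Rightarrow> nat" and f :: "'a \<times> 'a \<Rightarrow> 'a"
  assumes pc: "proper_coloring_on \<Gamma> \<chi>" and WG: "W \<inter> vertices \<Gamma> = {}"
    and YW: "\<And>w. w \<in> W \<Longrightarrow> Y w \<subseteq> \<Gamma>" and dY: "\<And>w. w \<in> W \<Longrightarrow> dclosed (Y w)"
    and fr: "\<And>w z. w \<in> W \<Longrightarrow> z \<in> vertices (Y w) \<Longrightarrow> \<chi> z = c w \<Longrightarrow> f (w,z) \<notin> vertices \<Gamma> \<and> f (w,z) \<notin> W"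
    and finj: "\<And>w z w' z'. w \<in> W \<Longrightarrow> z \<in> vertices (Y w) \<Longrightarrow> \<chi> z = c w \<Longrightarrow>
        w' \<in> W \<Longrightarrow> z' \<in> vertices (Y w') \<Longrightarrow> \<chi> z' = c w' \<Longrightarrow> f (w,z) = f (w',z') \<Longrightarrow> (w,z) = (w',z')"
begin

definition PP where "PP = {(w,z). w \<in> W \<and> z \<in> vertices (Y w) \<and> \<chi> z = c w}"

definition DS :: "('a \<times> 'a) set \<Rightarrow> 'a set set" where
  "DS S = \<Gamma> \<union> {insert w \<sigma> | w \<sigma>. w \<in> W \<and> \<sigma> \<in> Y w \<and> (\<forall>z\<in>\<sigma>. (w,z) \<notin> S)}
     \<union> (\<Union>p\<in>S. insert (f p) ` Yn (Y (fst p)) (fst p) (snd p))"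

lemma vY: "w \<in> W \<Longrightarrow> \<sigma> \<in> Y w \<Longrightarrow> \<sigma> \<subseteq> vertices \<Gamma>"
  using YW unfolding vertices_def by blast

lemma wnot: "w \<in> W \<Longrightarrow> w' \<in> W \<Longrightarrow> \<sigma> \<in> Y w \<Longrightarrow> w' \<notin> \<sigma>"
  using vY WG by blast

lemma F1:
  assumes "(w,z) \<in> PP" "G \<in> lkv (Y w) z" "y \<in> G"
  shows "(w,y) \<notin> PP"
proof
  assume y: "(w,y) \<in> PP"
  have w: "w \<in> W" and cz: "\<chi> z = c w" using assms(1) unfolding PP_def by auto
  have G: "insert z G \<in> Y w" "z \<notin> G" using assms(2) unfolding lkv_def by auto
  have "{y,z} \<subseteq> insert z G" using assms(3) by auto
  then have "{y,z} \<in> Y w" using dY[OF w] G(1) unfolding dclosed_def by blast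
  then have "{y,z} \<in> \<Gamma>" using YW[OF w] by auto
  moreover have "y \<noteq> z" using G(2) assms(3) by auto
  ultimately have "\<chi> y \<noteq> \<chi> z" using pc unfolding proper_coloring_on_def by blast
  then show False using y cz unfolding PP_def by auto
qed

lemma frP: "p \<in> PP \<Longrightarrow> f p \<notin> vertices \<Gamma> \<and> f p \<notin> W"
  using fr unfolding PP_def by auto

lemma PP_props: "(w,z) \<in> PP \<Longrightarrow> w \<in> W \<and> z \<in> vertices \<Gamma> \<and> \<chi> z = c w \<and> {z} \<in> Y w \<and> z \<noteq> w"
proof -
  assume "(w,z) \<in> PP"
  then have w: "w \<in> W" and z: "z \<in> vertices (Y w)" and cz: "\<chi> z = c w" unfolding PP_def by auto
  obtain \<sigma> where "z \<in> \<sigma>" "\<sigma> \<in> Y w" using z unfolding vertices_def by auto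
  then have "{z} \<in> Y w" "z \<in> vertices \<Gamma>" using dY[OF w] vY[OF w] unfolding dclosed_def by auto
  then show ?thesis using w cz WG by auto
qed

lemma lkv_sub: "w \<in> W \<Longrightarrow> G \<in> lkv (Y w) z \<Longrightarrow> G \<in> Y w \<and> z \<notin> G \<and> insert z G \<in> Y w \<and> G \<subseteq> vertices \<Gamma>"
  unfolding lkv_def using vY by blast


lemma DS_G: "X \<in> \<Gamma> \<Longrightarrow> X \<in> DS S"
  unfolding DS_def by (rule UnI1, rule UnI1)

lemma DS_cone: "w \<in> W \<Longrightarrow> \<sigma> \<in> Y w \<Longrightarrow> (\<forall>z\<in>\<sigma>. (w,z) \<notin> S) \<Longrightarrow> insert w \<sigma> \<in> DS S"
  unfolding DS_def by (rule UnI1, rule UnI2) blast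

lemma DS_f: "(w,z) \<in> S \<Longrightarrow> \<tau> \<in> Yn (Y w) w z \<Longrightarrow> insert (f (w,z)) \<tau> \<in> DS S"
  unfolding DS_def by (rule UnI2) force

lemma DS_cases:
  assumes "X \<in> DS S"
  obtains "X \<in> \<Gamma>"
  | w \<sigma> where "X = insert w \<sigma>" "w \<in> W" "\<sigma> \<in> Y w" "\<forall>z\<in>\<sigma>. (w,z) \<notin> S"
  | w z \<tau> where "(w,z) \<in> S" "X = insert (f (w,z)) \<tau>" "\<tau> \<in> Yn (Y w) w z"
proof -
  have "X \<in> \<Gamma> \<or> X \<in> {insert w \<sigma> | w \<sigma>. w \<in> W \<and> \<sigma> \<in> Y w \<and> (\<forall>z\<in>\<sigma>. (w,z) \<notin> S)}
    \<or> X \<in> (\<Union>p\<in>S. insert (f p) ` Yn (Y (fst p)) (fst p) (snd p))"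
    using assms unfolding DS_def by (simp only: Un_iff disj_assoc)
  then show ?thesis
  proof (elim disjE)
    assume "X \<in> \<Gamma>" then show ?thesis using that by blast
  next
    assume "X \<in> {insert w \<sigma> | w \<sigma>. w \<in> W \<and> \<sigma> \<in> Y w \<and> (\<forall>z\<in>\<sigma>. (w,z) \<notin> S)}"
    then show ?thesis using that(2) by blast
  next
    assume "X \<in> (\<Union>p\<in>S. insert (f p) ` Yn (Y (fst p)) (fst p) (snd p))"
    then obtain p \<tau> where "p \<in> S" "X = insert (f p) \<tau>" "\<tau> \<in> Yn (Y (fst p)) (fst p) (snd p)"
      by blast
    then show ?thesis using that(3)[of "fst p" "snd p" \<tau>] by auto
  qed
qed

lemma Yn_cases:
  assumes "\<tau> \<in> Yn Y' w z"
  obtains G where "G \<in> lkv Y' z" "\<tau> = G \<or> \<tau> = insert w G \<or> \<tau> = insert z G"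
proof -
  have "\<tau> \<in> lkv Y' z \<or> \<tau> \<in> insert w ` lkv Y' z \<or> \<tau> \<in> insert z ` lkv Y' z"
    using assms unfolding Yn_def by (simp only: Un_iff disj_assoc)
  then show ?thesis using that unfolding image_iff by metis
qed

lemma F3:
  assumes S: "S \<subseteq> PP" and p0: "(w0,z0) \<in> PP" "(w0,z0) \<notin> S"
    and X: "X \<in> DS S" and F: "{w0,z0} \<subseteq> X"
  shows "\<exists>\<sigma>. X = insert w0 \<sigma> \<and> \<sigma> \<in> Y w0 \<and> z0 \<in> \<sigma> \<and> (\<forall>z\<in>\<sigma>. (w0,z) \<notin> S)"
  using X
proof (cases rule: DS_cases)
  have pp: "w0 \<in> W" "z0 \<in> vertices \<Gamma>" "z0 \<noteq> w0" using PP_props[OF p0(1)] by auto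
  case 1
  then have "w0 \<in> vertices \<Gamma>" using F unfolding vertices_def by blast
  then show ?thesis using WG pp(1) by blast
next
  have pp: "w0 \<in> W" "z0 \<in> vertices \<Gamma>" "z0 \<noteq> w0" using PP_props[OF p0(1)] by auto
  case (2 w \<sigma>)
  have "w0 \<notin> \<sigma>" using wnot[OF 2(2) pp(1) 2(3)] .
  then have ww: "w0 = w" using F 2(1) by auto
  moreover have "z0 \<in> \<sigma>" using F 2(1) pp(3) ww by auto
  ultimately show ?thesis using 2 by blast
next
  have pp: "w0 \<in> W" "z0 \<in> vertices \<Gamma>" "z0 \<noteq> w0" using PP_props[OF p0(1)] by auto
  case (3 w z \<tau>)
  have wzP: "(w,z) \<in> PP" using 3(1) S by auto
  have ppw: "w \<in> W" "z \<in> vertices \<Gamma>" using PP_props[OF wzP] by auto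
  have fne: "f (w,z) \<noteq> w0" "f (w,z) \<noteq> z0" using frP[OF wzP] pp by auto
  obtain G where G: "G \<in> lkv (Y w) z" "\<tau> = G \<or> \<tau> = insert w G \<or> \<tau> = insert z G"
    using Yn_cases[OF 3(3)] by blast
  have G2: "G \<subseteq> vertices \<Gamma>" "z \<notin> G" using lkv_sub[OF ppw(1) G(1)] by auto
  have inn: "w0 \<in> \<tau>" "z0 \<in> \<tau>" using F 3(2) fne by auto
  have w0G: "w0 \<notin> G" using G2(1) pp(1) WG by auto
  have "w0 \<noteq> z" using ppw(2) pp(1) WG by auto
  then have ww: "w0 = w" using inn(1) G(2) w0G by auto
  then have z0: "z0 \<in> G \<or> z0 = z" using inn(2) G(2) pp(3) by auto
  show ?thesis
  proof (cases "z0 = z")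
    case True then show ?thesis using 3(1) p0(2) ww by auto
  next
    case False
    then have "z0 \<in> G" using z0 by auto
    then have "(w,z0) \<notin> PP" using F1[OF wzP G(1)] by auto
    then show ?thesis using p0(1) ww by auto
  qed
qed

lemma link_DS:
  assumes S: "S \<subseteq> PP" and p0: "(w0,z0) \<in> PP" "(w0,z0) \<notin> S"
  shows "link (DS S) {w0,z0} = lkv (Y w0) z0"
proof (rule set_eqI, rule iffI)
  have pp: "w0 \<in> W" "z0 \<in> vertices \<Gamma>" "z0 \<noteq> w0" using PP_props[OF p0(1)] by auto
  fix G assume "G \<in> link (DS S) {w0,z0}"
  then have G: "G \<in> DS S" "{w0,z0} \<inter> G = {}" "{w0,z0} \<union> G \<in> DS S" unfolding link_def by auto
  have ex: "\<exists>\<sigma>. {w0,z0} \<union> G = insert w0 \<sigma> \<and> \<sigma> \<in> Y w0 \<and> z0 \<in> \<sigma> \<and> (\<forall>z\<in>\<sigma>. (w0,z) \<notin> S)"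
    by (rule F3[OF S p0 G(3)]) auto
  then obtain \<sigma> where s: "{w0,z0} \<union> G = insert w0 \<sigma>" "\<sigma> \<in> Y w0" "z0 \<in> \<sigma>"
    by (elim exE conjE) simp
  have w0s: "w0 \<notin> \<sigma>" using wnot[OF pp(1) pp(1) s(2)] .
  have "G = ({w0,z0} \<union> G) - {w0,z0}" using G(2) by auto
  also have "\<dots> = \<sigma> - {z0}" unfolding s(1) using w0s by auto
  finally have Gs: "G = \<sigma> - {z0}" .
  have "G \<in> Y w0" using Gs s(2) dY[OF pp(1)] unfolding dclosed_def by blast
  moreover have "z0 \<notin> G" using Gs by auto
  moreover have "insert z0 G = \<sigma>" using Gs s(3) by auto
  ultimately show "G \<in> lkv (Y w0) z0" using s(2) unfolding lkv_def by auto
next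
  have pp: "w0 \<in> W" "z0 \<in> vertices \<Gamma>" "z0 \<noteq> w0" using PP_props[OF p0(1)] by auto
  fix G assume G: "G \<in> lkv (Y w0) z0"
  have G1: "G \<in> Y w0" "z0 \<notin> G" "insert z0 G \<in> Y w0" "G \<subseteq> vertices \<Gamma>" using lkv_sub[OF pp(1) G] by auto
  have "G \<in> DS S" using G1(1) YW[OF pp(1)] DS_G by blast
  moreover have "{w0,z0} \<inter> G = {}" using G1(2,4) pp(1) WG by auto
  moreover have "\<forall>z\<in>insert z0 G. (w0,z) \<notin> S"
  proof
    fix z assume "z \<in> insert z0 G"
    then show "(w0,z) \<notin> S" using p0(2) F1[OF p0(1) G] S by auto
  qed
  then have "insert w0 (insert z0 G) \<in> DS S" using G1(3) pp(1) DS_cone by blast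
  moreover have "{w0,z0} \<union> G = insert w0 (insert z0 G)" by auto
  ultimately show "G \<in> link (DS S) {w0,z0}" unfolding link_def by auto
qed



lemma Yn_sub: "(w,z) \<in> PP \<Longrightarrow> \<tau> \<in> Yn (Y w) w z \<Longrightarrow> \<tau> \<subseteq> insert w (vertices \<Gamma>)"
proof -
  assume wz: "(w,z) \<in> PP" and t: "\<tau> \<in> Yn (Y w) w z"
  have ppw: "w \<in> W" "z \<in> vertices \<Gamma>" using PP_props[OF wz] by auto
  obtain G where G: "G \<in> lkv (Y w) z" "\<tau> = G \<or> \<tau> = insert w G \<or> \<tau> = insert z G"
    using Yn_cases[OF t] by blast
  have "G \<subseteq> vertices \<Gamma>" using lkv_sub[OF ppw(1) G(1)] by auto
  then show ?thesis using G(2) ppw by auto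
qed

lemma vert_DS: "S \<subseteq> PP \<Longrightarrow> vertices (DS S) \<subseteq> vertices \<Gamma> \<union> W \<union> f ` S"
proof
  fix v assume S: "S \<subseteq> PP" and "v \<in> vertices (DS S)"
  then obtain X where X: "v \<in> X" "X \<in> DS S" unfolding vertices_def by auto
  from X(2) show "v \<in> vertices \<Gamma> \<union> W \<union> f ` S"
  proof (cases rule: DS_cases)
    case 1 then show ?thesis using X(1) unfolding vertices_def by auto
  next
    case (2 w \<sigma>) then show ?thesis using X(1) vY[of w \<sigma>] by auto
  next
    case (3 w z \<tau>)
    have "\<tau> \<subseteq> insert w (vertices \<Gamma>)" using Yn_sub 3 S by auto
    moreover have "w \<in> W" using 3(1) S PP_props by blast
    ultimately show ?thesis using X(1) 3 by auto
  qed
qed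

lemma sd_DS:
  assumes S: "S \<subseteq> PP" and p0: "(w0,z0) \<in> PP" "(w0,z0) \<notin> S"
  shows "stellar_subdivision (DS S) {w0,z0} (f (w0,z0)) = DS (insert (w0,z0) S)"
proof -
  have pp: "w0 \<in> W" "z0 \<in> vertices \<Gamma>" "z0 \<noteq> w0" "\<chi> z0 = c w0" using PP_props[OF p0(1)] by auto
  have lk: "link (DS S) {w0,z0} = lkv (Y w0) z0" by (rule link_DS[OF S p0])
  have fp0: "f (w0,z0) \<notin> vertices \<Gamma>" "f (w0,z0) \<notin> W" using frP[OF p0(1)] by auto
  have w0G: "w0 \<notin> vertices \<Gamma>" using pp(1) WG by auto
  show ?thesis
  proof (rule set_eqI, rule iffI)
    fix X assume X: "X \<in> stellar_subdivision (DS S) {w0,z0} (f (w0,z0))"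
    show "X \<in> DS (insert (w0,z0) S)"
    proof (cases "X \<in> DS S \<and> \<not> {w0,z0} \<subseteq> X")
      case True
      then have X1: "X \<in> DS S" "\<not> {w0,z0} \<subseteq> X" by auto
      from X1(1) show ?thesis
      proof (cases rule: DS_cases)
        case 1 then show ?thesis by (rule DS_G)
      next
        case (2 w \<sigma>)
        have "\<forall>z\<in>\<sigma>. (w,z) \<notin> insert (w0,z0) S"
        proof
          fix z assume "z \<in> \<sigma>"
          then show "(w,z) \<notin> insert (w0,z0) S" using 2 X1(2) by auto
        qed
        then show ?thesis using DS_cone 2 by auto
      next
        case (3 w z \<tau>)
        then show ?thesis using DS_f[of w z "insert (w0,z0) S" \<tau>] by auto
      qed
    next
      case False
      then obtain A H G where AHG: "X = A \<union> H \<union> G" "A \<subseteq> {f (w0,z0)}" "H \<subset> {w0,z0}"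
          "G \<in> link (DS S) {w0,z0}"
        using X unfolding stellar_subdivision_def by blast
      have G: "G \<in> lkv (Y w0) z0" using AHG(4) lk by simp
      have G1: "G \<in> Y w0" "z0 \<notin> G" "insert z0 G \<in> Y w0" "G \<subseteq> vertices \<Gamma>"
        using lkv_sub[OF pp(1) G] by auto
      have H: "H = {} \<or> H = {w0} \<or> H = {z0}" using AHG(3) by auto
      have HG: "H \<union> G \<in> Yn (Y w0) w0 z0"
        using H G unfolding Yn_def by auto
      show ?thesis
      proof (cases "A = {}")
        case False
        then have "A = {f (w0,z0)}" using AHG(2) by auto
        then have "X = insert (f (w0,z0)) (H \<union> G)" using AHG(1) by auto
        then show ?thesis using DS_f[of w0 z0 "insert (w0,z0) S" "H \<union> G"] HG by auto
      next
        case True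
        then have XHG: "X = H \<union> G" using AHG(1) by auto
        show ?thesis
        proof (cases "H = {w0}")
          case True
          have "\<forall>z\<in>G. (w0,z) \<notin> insert (w0,z0) S"
          proof
            fix z assume "z \<in> G"
            then show "(w0,z) \<notin> insert (w0,z0) S" using F1[OF p0(1) G] S G1(2) by auto
          qed
          then have "insert w0 G \<in> DS (insert (w0,z0) S)" using DS_cone[OF pp(1) G1(1)] by blast
          then show ?thesis using XHG True by auto
        next
          case False
          then have "X = G \<or> X = insert z0 G" using H XHG by auto
          then have "X \<in> \<Gamma>" using G1 YW[OF pp(1)] by auto
          then show ?thesis by (rule DS_G)
        qed
      qed
    qed
  next
    fix X assume X: "X \<in> DS (insert (w0,z0) S)"
    from X show "X \<in> stellar_subdivision (DS S) {w0,z0} (f (w0,z0))"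
    proof (cases rule: DS_cases)
      case 1
      then have "\<not> {w0,z0} \<subseteq> X" using w0G unfolding vertices_def by auto
      then show ?thesis using DS_G[OF 1, of S] unfolding stellar_subdivision_def by blast
    next
      case (2 w \<sigma>)
      have "X \<in> DS S" using DS_cone[of w \<sigma> S] 2 by auto
      moreover have "\<not> {w0,z0} \<subseteq> X"
      proof
        assume F: "{w0,z0} \<subseteq> X"
        have "w0 \<notin> \<sigma>" using wnot[OF 2(2) pp(1) 2(3)] .
        then have "w = w0" using F 2(1) by auto
        moreover have "z0 \<in> \<sigma>" using F 2(1) pp(3) \<open>w = w0\<close> by auto
        ultimately show False using 2(4) by auto
      qed
      ultimately show ?thesis unfolding stellar_subdivision_def by blast
    next
      case (3 w z \<tau>)
      show ?thesis
      proof (cases "(w,z) = (w0,z0)")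
        case True
        then have t: "\<tau> \<in> Yn (Y w0) w0 z0" "X = insert (f (w0,z0)) \<tau>" using 3 by auto
        obtain G where G: "G \<in> lkv (Y w0) z0" "\<tau> = G \<or> \<tau> = insert w0 G \<or> \<tau> = insert z0 G"
          using Yn_cases[OF t(1)] by blast
        have "\<exists>H. H \<subset> {w0,z0} \<and> \<tau> = H \<union> G"
        proof -
          from G(2) consider "\<tau> = G" | "\<tau> = insert w0 G" | "\<tau> = insert z0 G" by blast
          then show ?thesis
          proof cases
            case 1 then show ?thesis by (intro exI[of _ "{}"]) auto
          next
            case 2 then show ?thesis using pp(3) by (intro exI[of _ "{w0}"]) auto
          next
            case 3 then show ?thesis using pp(3) by (intro exI[of _ "{z0}"]) auto
          qed
        qed
        then obtain H where H: "H \<subset> {w0,z0}" "\<tau> = H \<union> G" by blast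
        have "X = {f (w0,z0)} \<union> H \<union> G" using t(2) H(2) by auto
        moreover have "G \<in> link (DS S) {w0,z0}" using lk G(1) by simp
        ultimately show ?thesis using H(1) unfolding stellar_subdivision_def by blast
      next
        case False
        then have inS: "(w,z) \<in> S" using 3(1) by auto
        have "X \<in> DS S" using DS_f[OF inS 3(3)] 3(2) by simp
        moreover have "\<not> {w0,z0} \<subseteq> X"
        proof
          assume FX: "{w0,z0} \<subseteq> X"
          obtain \<sigma> where "X = insert w0 \<sigma>" "\<sigma> \<in> Y w0" "z0 \<in> \<sigma>"
            using F3[OF S p0 \<open>X \<in> DS S\<close> FX] by (elim exE conjE) simp
          then have "f (w,z) \<in> insert w0 \<sigma>" using 3(2) by auto
          moreover have "f (w,z) \<notin> vertices \<Gamma>" "f (w,z) \<noteq> w0" using frP[of "(w,z)"] inS S pp(1) by auto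
          ultimately show False using vY[OF pp(1) \<open>\<sigma> \<in> Y w0\<close>] by auto
        qed
        ultimately show ?thesis unfolding stellar_subdivision_def by blast
      qed
    qed
  qed
qed


lemma steps_DS:
  assumes fS: "finite S" and S: "S \<subseteq> PP" and fA: "\<forall>p\<in>PP. f p \<notin> A"
  shows "(stepA A)\<^sup>*\<^sup>* (DS {}) (DS S)"
  using fS S
proof (induction S rule: finite_induct)
  case empty then show ?case by simp
next
  case (insert p0 S)
  obtain w0 z0 where p0: "p0 = (w0,z0)" by (cases p0)
  have S: "S \<subseteq> PP" and p0P: "(w0,z0) \<in> PP" and p0S: "(w0,z0) \<notin> S" using insert p0 by auto
  have pp: "w0 \<in> W" "z0 \<in> vertices \<Gamma>" "z0 \<noteq> w0" "{z0} \<in> Y w0" using PP_props[OF p0P] by auto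
  have Fin: "insert w0 {z0} \<in> DS S" using DS_cone[OF pp(1) pp(4)] p0S by auto
  have fr0: "f (w0,z0) \<notin> vertices \<Gamma>" "f (w0,z0) \<notin> W" using frP[OF p0P] by auto
  have "f (w0,z0) \<notin> f ` S"
  proof
    assume "f (w0,z0) \<in> f ` S"
    then obtain q where q: "q \<in> S" "f q = f (w0,z0)" by auto
    obtain w z where qq: "q = (w,z)" by (cases q)
    have "(w,z) \<in> PP" using q(1) qq S by auto
    then have "(w,z) = (w0,z0)" using finj p0P q(2) qq unfolding PP_def by auto
    then show False using q(1) qq p0S by auto
  qed
  then have "f (w0,z0) \<notin> vertices (DS S)" using vert_DS[OF S] fr0 by auto
  moreover have "f (w0,z0) \<notin> A" using fA p0P by auto
  ultimately have "stepA A (DS S) (DS (insert (w0,z0) S))"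
    unfolding stepA_def using Fin sd_DS[OF S p0P p0S, symmetric] by (intro exI[of _ "{w0,z0}"] exI[of _ "f (w0,z0)"]) auto
  then show ?case using insert.IH S p0 by (meson rtranclp.rtrancl_into_rtrancl)
qed

lemma DS_empty: "DS {} = \<Gamma> \<union> (\<Union>w\<in>W. insert w ` Y w)"
  unfolding DS_def by blast

definition G1 where "G1 = \<Gamma> \<union> {insert w \<sigma> | w \<sigma>. w \<in> W \<and> \<sigma> \<in> Y w \<and> (\<forall>z\<in>\<sigma>. (w,z) \<notin> PP)}"

lemma DS_PP: "DS PP = G1 \<union> (\<Union>p\<in>PP. insert (f p) ` Yn (Y (fst p)) (fst p) (snd p))"
  unfolding DS_def G1_def by blast

lemma Yn_G1: "(w,z) \<in> PP \<Longrightarrow> Yn (Y w) w z \<subseteq> G1"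
proof
  fix \<tau> assume wz: "(w,z) \<in> PP" and t: "\<tau> \<in> Yn (Y w) w z"
  have ppw: "w \<in> W" using PP_props[OF wz] by auto
  obtain G where G: "G \<in> lkv (Y w) z" "\<tau> = G \<or> \<tau> = insert w G \<or> \<tau> = insert z G"
    using Yn_cases[OF t] by blast
  have G1': "G \<in> Y w" "z \<notin> G" "insert z G \<in> Y w" using lkv_sub[OF ppw G(1)] by auto
  from G(2) consider "\<tau> = G" | "\<tau> = insert w G" | "\<tau> = insert z G" by blast
  then show "\<tau> \<in> G1"
  proof cases
    case 1 then show ?thesis using G1'(1) YW[OF ppw] unfolding G1_def by auto
  next
    case 3 then show ?thesis using G1'(3) YW[OF ppw] unfolding G1_def by auto
  next
    case 2
    have "\<forall>y\<in>G. (w,y) \<notin> PP" using F1[OF wz G(1)] by blast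
    then show ?thesis using 2 G1'(1) ppw unfolding G1_def by blast
  qed
qed

lemma dclosed_lkv: "dclosed Y' \<Longrightarrow> dclosed (lkv Y' z)"
  unfolding dclosed_def lkv_def by (auto dest: insert_mono)

lemma dclosed_Yn: "dclosed Y' \<Longrightarrow> dclosed (Yn Y' w z)"
proof -
  assume d: "dclosed Y'"
  then have dl: "dclosed (lkv Y' z)" by (rule dclosed_lkv)
  show ?thesis unfolding dclosed_def
  proof (intro ballI allI impI)
    fix \<tau> S assume t: "\<tau> \<in> Yn Y' w z" and S: "S \<subseteq> \<tau>"
    obtain G where G: "G \<in> lkv Y' z" "\<tau> = G \<or> \<tau> = insert w G \<or> \<tau> = insert z G"
      using Yn_cases[OF t] by blast
    have sub: "\<And>S'. S' \<subseteq> G \<Longrightarrow> S' \<in> lkv Y' z" using dl G(1) unfolding dclosed_def by blast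
    from G(2) consider "\<tau> = G" | "\<tau> = insert w G" | "\<tau> = insert z G" by blast
    then show "S \<in> Yn Y' w z"
    proof cases
      case 1 then show ?thesis using sub S unfolding Yn_def by blast
    next
      case 2
      show ?thesis
      proof (cases "w \<in> S")
        case True
        then have "S = insert w (S - {w})" "S - {w} \<subseteq> G" using S 2 by auto
        then show ?thesis using sub unfolding Yn_def by blast
      next
        case False
        then have "S \<subseteq> G" using S 2 by auto
        then show ?thesis using sub unfolding Yn_def by blast
      qed
    next
      case 3
      show ?thesis
      proof (cases "z \<in> S")
        case True
        then have "S = insert z (S - {z})" "S - {z} \<subseteq> G" using S 3 by auto
        then show ?thesis using sub unfolding Yn_def by blast
      next
        case False
        then have "S \<subseteq> G" using S 3 by auto
        then show ?thesis using sub unfolding Yn_def by blast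
      qed
    qed
  qed
qed


lemma G1_simplicial:
  assumes sc: "simplicial_complex \<Gamma>" and fW: "finite W"
  shows "simplicial_complex G1"
proof -
  have fG: "finite \<Gamma>" and ffG: "\<forall>F\<in>\<Gamma>. finite F" and dG: "dclosed \<Gamma>"
    using sc unfolding simplicial_complex_def dclosed_def by auto
  have sub: "{insert w \<sigma> | w \<sigma>. w \<in> W \<and> \<sigma> \<in> Y w \<and> (\<forall>z\<in>\<sigma>. (w,z) \<notin> PP)}
      \<subseteq> (\<lambda>(w,\<sigma>). insert w \<sigma>) ` (W \<times> \<Gamma>)"
  proof
    fix X assume "X \<in> {insert w \<sigma> | w \<sigma>. w \<in> W \<and> \<sigma> \<in> Y w \<and> (\<forall>z\<in>\<sigma>. (w,z) \<notin> PP)}"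
    then obtain w \<sigma> where "X = insert w \<sigma>" "w \<in> W" "\<sigma> \<in> Y w" by blast
    then show "X \<in> (\<lambda>(w,\<sigma>). insert w \<sigma>) ` (W \<times> \<Gamma>)" using YW
      by (intro rev_image_eqI[of "(w,\<sigma>)"]) auto
  qed
  have "finite ((\<lambda>(w,\<sigma>). insert w \<sigma>) ` (W \<times> \<Gamma>))" using fW fG by auto
  then have f1: "finite G1" unfolding G1_def using sub fG by (meson finite_UnI finite_subset)
  have f2: "\<forall>X\<in>G1. finite X"
  proof
    fix X assume "X \<in> G1"
    then consider "X \<in> \<Gamma>" | w \<sigma> where "X = insert w \<sigma>" "w \<in> W" "\<sigma> \<in> Y w"
      unfolding G1_def by blast
    then show "finite X" proof cases
      case 1 then show ?thesis using ffG by auto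
    next
      case 2 then show ?thesis using ffG YW by auto
    qed
  qed
  have d: "dclosed G1" unfolding dclosed_def
  proof (intro ballI allI impI)
    fix X S assume X: "X \<in> G1" and S: "S \<subseteq> X"
    from X consider "X \<in> \<Gamma>" | w \<sigma> where "X = insert w \<sigma>" "w \<in> W" "\<sigma> \<in> Y w" "\<forall>z\<in>\<sigma>. (w,z) \<notin> PP"
      unfolding G1_def by blast
    then show "S \<in> G1"
    proof cases
      case 1 then show ?thesis using dG S unfolding dclosed_def G1_def by blast
    next
      case 2
      have sub2: "S - {w} \<subseteq> \<sigma>" using S 2(1) by auto
      then have Sy: "S - {w} \<in> Y w" using dY[OF 2(2)] 2(3) unfolding dclosed_def by blast
      show ?thesis
      proof (cases "w \<in> S")
        case True
        then have "S = insert w (S - {w})" by auto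
        moreover have "\<forall>z\<in>S - {w}. (w,z) \<notin> PP" using 2(4) sub2 by auto
        ultimately show ?thesis using Sy 2(2) unfolding G1_def by blast
      next
        case False
        then have "S = S - {w}" by auto
        then show ?thesis using Sy YW[OF 2(2)] unfolding G1_def by auto
      qed
    qed
  qed
  show ?thesis using f1 f2 d unfolding simplicial_complex_def dclosed_def by blast
qed

lemma G1_vertices: "vertices G1 \<subseteq> vertices \<Gamma> \<union> W"
proof
  fix v assume "v \<in> vertices G1"
  then obtain X where X: "v \<in> X" "X \<in> G1" unfolding vertices_def by auto
  from X(2) consider "X \<in> \<Gamma>" | w \<sigma> where "X = insert w \<sigma>" "w \<in> W" "\<sigma> \<in> Y w"
    unfolding G1_def by blast
  then show "v \<in> vertices \<Gamma> \<union> W"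
  proof cases
    case 1 then show ?thesis using X(1) unfolding vertices_def by auto
  next
    case 2 then show ?thesis using X(1) vY by auto
  qed
qed

lemma G1_proper: "proper_coloring_on G1 (\<lambda>v. if v \<in> W then c v else \<chi> v)"
  unfolding proper_coloring_on_def
proof (intro allI impI)
  fix u v assume uv: "{u,v} \<in> G1" "u \<noteq> v"
  from uv(1) consider "{u,v} \<in> \<Gamma>" | w \<sigma> where "{u,v} = insert w \<sigma>" "w \<in> W" "\<sigma> \<in> Y w" "\<forall>z\<in>\<sigma>. (w,z) \<notin> PP"
    unfolding G1_def by blast
  then show "(if u \<in> W then c u else \<chi> u) \<noteq> (if v \<in> W then c v else \<chi> v)"
  proof cases
    case 1
    then have "u \<in> vertices \<Gamma>" "v \<in> vertices \<Gamma>" unfolding vertices_def by auto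
    then have "u \<notin> W" "v \<notin> W" using WG by auto
    then show ?thesis using 1 uv(2) pc unfolding proper_coloring_on_def by auto
  next
    case 2
    have sV: "\<sigma> \<subseteq> vertices \<Gamma>" using vY[OF 2(2,3)] .
    have wn: "w \<notin> \<sigma>" using sV 2(2) WG by auto
    have key: "\<And>y. y \<in> \<sigma> \<Longrightarrow> \<chi> y \<noteq> c w \<and> y \<notin> W"
    proof -
      fix y assume y: "y \<in> \<sigma>"
      then have "y \<in> vertices (Y w)" using 2(3) unfolding vertices_def by auto
      then show "\<chi> y \<noteq> c w \<and> y \<notin> W" using 2(4) y sV WG 2(2) unfolding PP_def by auto
    qed
    have uvs: "u \<in> insert w \<sigma>" "v \<in> insert w \<sigma>" "w \<in> {u,v}" using 2(1) by blast+
    have "(u = w \<and> v \<in> \<sigma>) \<or> (v = w \<and> u \<in> \<sigma>)"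
      using uvs uv(2) by blast
    then show ?thesis
    proof
      assume a: "u = w \<and> v \<in> \<sigma>"
      then have "\<chi> v \<noteq> c w" "v \<notin> W" using key by auto
      then show ?thesis using a 2(2) by auto
    next
      assume a: "v = w \<and> u \<in> \<sigma>"
      then have "\<chi> u \<noteq> c w" "u \<notin> W" using key by auto
      then show ?thesis using a 2(2) by auto
    qed
  qed
qed

end


lemma fresh_inj:
  assumes inf: "infinite (UNIV::'a set)" and fP: "finite P" and fT: "finite T"
  shows "\<exists>f::'b \<Rightarrow> 'a. inj_on f P \<and> f ` P \<inter> T = {}"
proof -
  have "infinite (UNIV - T)" using inf fT by auto
  then obtain h :: "nat \<Rightarrow> 'a" where h: "inj h" "range h \<subseteq> UNIV - T"
    using infinite_countable_subset by blast
  obtain e m where e: "e ` P = {i::nat. i < m}" "inj_on e P" using finite_imp_inj_to_nat_seg[OF fP] by blast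
  have "inj_on (h \<circ> e) P" using h(1) e(2) by (simp add: comp_inj_on inj_on_subset)
  moreover have "(h \<circ> e) ` P \<inter> T = {}" using h(2) by auto
  ultimately show ?thesis by blast
qed

definition config :: "nat \<Rightarrow> 'a set set \<Rightarrow> ('a \<Rightarrow> nat) \<Rightarrow> 'a set \<Rightarrow> ('a \<Rightarrow> 'a set set) \<Rightarrow> ('a \<Rightarrow> nat set) \<Rightarrow> nat \<Rightarrow> bool" where
  "config D \<Gamma> \<chi> W Y B n \<longleftrightarrow> simplicial_complex \<Gamma> \<and> proper_coloring_on \<Gamma> \<chi> \<and> finite W \<and> W \<inter> vertices \<Gamma> = {}
     \<and> (\<forall>w\<in>W. Y w \<subseteq> \<Gamma> \<and> dclosed (Y w) \<and> B w \<subseteq> {..D} \<and> card (B w) + n \<le> D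
          \<and> (\<forall>\<sigma>\<in>Y w. card {v\<in>\<sigma>. \<chi> v \<notin> B w} \<le> n))"

lemma finite_vertices: "simplicial_complex \<Gamma> \<Longrightarrow> finite (vertices \<Gamma>)"
  unfolding simplicial_complex_def vertices_def by auto

lemma round:
  fixes \<Gamma> :: "'a set set"
  assumes inf: "infinite (UNIV::'a set)" and fA: "finite A" and cfg: "config D \<Gamma> \<chi> W Y B n"
  shows "\<exists>\<Gamma>1 \<chi>1 W1 Y1 B1. (stepA A)\<^sup>*\<^sup>* (\<Gamma> \<union> (\<Union>w\<in>W. insert w ` Y w)) (\<Gamma>1 \<union> (\<Union>w\<in>W1. insert w ` Y1 w))
     \<and> \<Gamma> \<subseteq> \<Gamma>1 \<and> config D \<Gamma>1 \<chi>1 W1 Y1 B1 (n - 1) \<and> (n = 0 \<longrightarrow> W1 = {})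
     \<and> (\<forall>v\<in>vertices \<Gamma>. \<chi>1 v = \<chi> v) \<and> (\<forall>v\<in>vertices \<Gamma>1 - vertices \<Gamma>. \<chi>1 v \<le> D)"
proof -
  have sc: "simplicial_complex \<Gamma>" and pc: "proper_coloring_on \<Gamma> \<chi>" and fW: "finite W"
    and WG: "W \<inter> vertices \<Gamma> = {}"
    and cw: "\<And>w. w \<in> W \<Longrightarrow> Y w \<subseteq> \<Gamma> \<and> dclosed (Y w) \<and> B w \<subseteq> {..D} \<and> card (B w) + n \<le> D
          \<and> (\<forall>\<sigma>\<in>Y w. card {v\<in>\<sigma>. \<chi> v \<notin> B w} \<le> n)"
    using cfg unfolding config_def by auto
  have "\<forall>w\<in>W. \<exists>x. x \<le> D \<and> x \<notin> B w"
  proof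
    fix w assume w: "w \<in> W"
    have "card (B w) < card {..D}" using cw[OF w] by auto
    then have "\<not> {..D} \<subseteq> B w" using cw[OF w] by (meson card_mono finite_atMost leD finite_subset)
    then show "\<exists>x. x \<le> D \<and> x \<notin> B w" by auto
  qed
  then obtain c where c: "\<And>w. w \<in> W \<Longrightarrow> c w \<le> D \<and> c w \<notin> B w" by metis
  define P where "P = {(w,z). w \<in> W \<and> z \<in> vertices (Y w) \<and> \<chi> z = c w}"
  have PV: "P \<subseteq> W \<times> vertices \<Gamma>"
  proof
    fix p assume "p \<in> P"
    then obtain w z where p: "p = (w,z)" "w \<in> W" "z \<in> vertices (Y w)" unfolding P_def by auto
    then have "z \<in> vertices \<Gamma>" using cw[OF p(2)] unfolding vertices_def by auto
    then show "p \<in> W \<times> vertices \<Gamma>" using p by auto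
  qed
  have fP: "finite P" using PV fW finite_vertices[OF sc] by (meson finite_SigmaI finite_subset)
  obtain f :: "'a \<times> 'a \<Rightarrow> 'a" where f: "inj_on f P" "f ` P \<inter> (A \<union> vertices \<Gamma> \<union> W) = {}"
    using fresh_inj[OF inf fP, of "A \<union> vertices \<Gamma> \<union> W"] fA fW finite_vertices[OF sc] by blast
  interpret R: rctx \<Gamma> \<chi> W Y c f
  proof
    show "proper_coloring_on \<Gamma> \<chi>" by (rule pc)
    show "W \<inter> vertices \<Gamma> = {}" by (rule WG)
    show "\<And>w. w \<in> W \<Longrightarrow> Y w \<subseteq> \<Gamma>" using cw by blast
    show "\<And>w. w \<in> W \<Longrightarrow> dclosed (Y w)" using cw by blast
    show "\<And>w z. w \<in> W \<Longrightarrow> z \<in> vertices (Y w) \<Longrightarrow> \<chi> z = c w \<Longrightarrow> f (w,z) \<notin> vertices \<Gamma> \<and> f (w,z) \<notin> W"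
      using f(2) unfolding P_def by blast
    show "\<And>w z w' z'. w \<in> W \<Longrightarrow> z \<in> vertices (Y w) \<Longrightarrow> \<chi> z = c w \<Longrightarrow>
        w' \<in> W \<Longrightarrow> z' \<in> vertices (Y w') \<Longrightarrow> \<chi> z' = c w' \<Longrightarrow> f (w,z) = f (w',z') \<Longrightarrow> (w,z) = (w',z')"
      using f(1) unfolding P_def inj_on_def by blast
  qed
  have PPeq: "R.PP = P" unfolding R.PP_def P_def by simp
  have fPA: "\<forall>p\<in>R.PP. f p \<notin> A" using f(2) PPeq by blast
  have steps: "(stepA A)\<^sup>*\<^sup>* (R.DS {}) (R.DS R.PP)"
    using R.steps_DS[OF _ order_refl fPA] fP PPeq by simp
  define g where "g = inv_into P f"
  define W1 where "W1 = f ` P"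
  define Y1 where "Y1 = (\<lambda>x. Yn (Y (fst (g x))) (fst (g x)) (snd (g x)))"
  define B1 where "B1 = (\<lambda>x. insert (c (fst (g x))) (B (fst (g x))))"
  define \<chi>1 where "\<chi>1 = (\<lambda>v. if v \<in> W then c v else \<chi> v)"
  have gf: "\<And>p. p \<in> P \<Longrightarrow> g (f p) = p" unfolding g_def using f(1) by (simp add: inv_into_f_f)
  have U: "(\<Union>p\<in>R.PP. insert (f p) ` Yn (Y (fst p)) (fst p) (snd p)) = (\<Union>x\<in>W1. insert x ` Y1 x)"
    unfolding W1_def Y1_def PPeq using gf by auto
  have stepsF: "(stepA A)\<^sup>*\<^sup>* (\<Gamma> \<union> (\<Union>w\<in>W. insert w ` Y w)) (R.G1 \<union> (\<Union>x\<in>W1. insert x ` Y1 x))"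
    using steps unfolding R.DS_empty R.DS_PP U .
  have GG1: "\<Gamma> \<subseteq> R.G1" unfolding R.G1_def by blast
  have sc1: "simplicial_complex R.G1" by (rule R.G1_simplicial[OF sc fW])
  have pc1: "proper_coloring_on R.G1 \<chi>1" unfolding \<chi>1_def by (rule R.G1_proper)
  have fW1: "finite W1" unfolding W1_def using fP by simp
  have W1G: "W1 \<inter> vertices R.G1 = {}" using R.G1_vertices f(2) unfolding W1_def by blast
  have nz: "\<And>w z. (w,z) \<in> P \<Longrightarrow> n \<ge> 1"
  proof -
    fix w z assume wz: "(w,z) \<in> P"
    have pp: "w \<in> W" "{z} \<in> Y w" "\<chi> z = c w" using R.PP_props[of w z] wz PPeq by auto
    have "card {v\<in>{z}. \<chi> v \<notin> B w} \<le> n" using cw[OF pp(1)] pp(2) by blast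
    moreover have "{v\<in>{z}. \<chi> v \<notin> B w} = {z}" using pp(3) c[OF pp(1)] by auto
    ultimately show "n \<ge> 1" by simp
  qed
  have cfgW: "\<forall>x\<in>W1. Y1 x \<subseteq> R.G1 \<and> dclosed (Y1 x) \<and> B1 x \<subseteq> {..D} \<and> card (B1 x) + (n - 1) \<le> D
          \<and> (\<forall>\<tau>\<in>Y1 x. card {v\<in>\<tau>. \<chi>1 v \<notin> B1 x} \<le> n - 1)"
  proof
    fix x assume "x \<in> W1"
    then obtain w z where wz: "(w,z) \<in> P" "x = f (w,z)" unfolding W1_def by auto
    have gx: "g x = (w,z)" using gf wz by simp
    have wzP: "(w,z) \<in> R.PP" using wz PPeq by simp
    have pp: "w \<in> W" "z \<in> vertices \<Gamma>" "\<chi> z = c w" "z \<noteq> w" using R.PP_props[OF wzP] by auto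
    have Y1x: "Y1 x = Yn (Y w) w z" and B1x: "B1 x = insert (c w) (B w)" unfolding Y1_def B1_def gx by auto
    have n1: "n \<ge> 1" using nz wz(1) .
    have a1: "Y1 x \<subseteq> R.G1" using R.Yn_G1[OF wzP] Y1x by simp
    have a2: "dclosed (Y1 x)" unfolding Y1x by (rule R.dclosed_Yn) (use cw[OF pp(1)] in blast)
    have a3: "B1 x \<subseteq> {..D}" using B1x cw[OF pp(1)] c[OF pp(1)] by auto
    have fB: "finite (B w)" using cw[OF pp(1)] finite_subset by blast
    have "card (B1 x) \<le> Suc (card (B w))" unfolding B1x using fB by (simp add: card_insert_if)
    then have a4: "card (B1 x) + (n - 1) \<le> D" using cw[OF pp(1)] n1 by linarith
    have a5: "\<forall>\<tau>\<in>Y1 x. card {v\<in>\<tau>. \<chi>1 v \<notin> B1 x} \<le> n - 1"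
    proof
      fix \<tau> assume "\<tau> \<in> Y1 x"
      then have t: "\<tau> \<in> Yn (Y w) w z" using Y1x by simp
      obtain G where G: "G \<in> lkv (Y w) z" "\<tau> = G \<or> \<tau> = insert w G \<or> \<tau> = insert z G"
        using R.Yn_cases[OF t] by blast
      have G1: "G \<in> Y w" "z \<notin> G" "insert z G \<in> Y w" "G \<subseteq> vertices \<Gamma>"
        using R.lkv_sub[OF pp(1) G(1)] by auto
      have fG: "finite G" using G1(4) finite_vertices[OF sc] finite_subset by blast
      define T where "T = {v\<in>G. \<chi> v \<notin> B w}"
      have fT: "finite T" using fG unfolding T_def by auto
      have "{v\<in>insert z G. \<chi> v \<notin> B w} = insert z T" using pp(3) c[OF pp(1)] unfolding T_def by auto
      moreover have "card {v\<in>insert z G. \<chi> v \<notin> B w} \<le> n" using cw[OF pp(1)] G1(3) by blast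
      moreover have "z \<notin> T" using G1(2) unfolding T_def by auto
      ultimately have cT: "card T \<le> n - 1" using fT by simp
      have zW: "z \<notin> W" using pp(2) WG by auto
      have sub: "{v\<in>\<tau>. \<chi>1 v \<notin> B1 x} \<subseteq> T"
      proof
        fix v assume v: "v \<in> {v\<in>\<tau>. \<chi>1 v \<notin> B1 x}"
        then have v1: "v \<in> \<tau>" "\<chi>1 v \<notin> insert (c w) (B w)" using B1x by auto
        have "v \<noteq> w" using v1(2) pp(1) unfolding \<chi>1_def by auto
        moreover have "v \<noteq> z" using v1(2) zW pp(3) unfolding \<chi>1_def by auto
        ultimately have vG: "v \<in> G" using v1(1) G(2) by auto
        then have "v \<notin> W" using G1(4) WG by auto
        then show "v \<in> T" using v1(2) vG unfolding T_def \<chi>1_def by auto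
      qed
      show "card {v\<in>\<tau>. \<chi>1 v \<notin> B1 x} \<le> n - 1" using card_mono[OF fT sub] cT by simp
    qed
    show "Y1 x \<subseteq> R.G1 \<and> dclosed (Y1 x) \<and> B1 x \<subseteq> {..D} \<and> card (B1 x) + (n - 1) \<le> D
          \<and> (\<forall>\<tau>\<in>Y1 x. card {v\<in>\<tau>. \<chi>1 v \<notin> B1 x} \<le> n - 1)" using a1 a2 a3 a4 a5 by blast
  qed
  have cfg1: "config D R.G1 \<chi>1 W1 Y1 B1 (n - 1)"
    unfolding config_def using sc1 pc1 fW1 W1G cfgW by blast
  have n0: "n = 0 \<longrightarrow> W1 = {}" using nz unfolding W1_def by fastforce
  have ch1: "\<forall>v\<in>vertices \<Gamma>. \<chi>1 v = \<chi> v" using WG unfolding \<chi>1_def by auto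
  have ch2: "\<forall>v\<in>vertices R.G1 - vertices \<Gamma>. \<chi>1 v \<le> D"
  proof
    fix v assume "v \<in> vertices R.G1 - vertices \<Gamma>"
    then have "v \<in> W" using R.G1_vertices by auto
    then show "\<chi>1 v \<le> D" using c unfolding \<chi>1_def by auto
  qed
  show ?thesis using stepsF GG1 cfg1 n0 ch1 ch2 by blast
qed


lemma vertices_mono: "X \<subseteq> Y \<Longrightarrow> vertices X \<subseteq> vertices Y"
  unfolding vertices_def by auto

lemma cone_fill:
  fixes \<Gamma> :: "'a set set"
  assumes inf: "infinite (UNIV::'a set)" and fA: "finite A"
  shows "config D \<Gamma> \<chi> W Y B n \<Longrightarrow> \<exists>\<Delta>' \<chi>'. (stepA A)\<^sup>*\<^sup>* (\<Gamma> \<union> (\<Union>w\<in>W. insert w ` Y w)) \<Delta>'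
     \<and> \<Gamma> \<subseteq> \<Delta>' \<and> proper_coloring_on \<Delta>' \<chi>' \<and> (\<forall>v\<in>vertices \<Gamma>. \<chi>' v = \<chi> v)
     \<and> (\<forall>v\<in>vertices \<Delta>' - vertices \<Gamma>. \<chi>' v \<le> D) \<and> simplicial_complex \<Delta>'"
proof (induction n arbitrary: \<Gamma> \<chi> W Y B)
  case 0
  obtain \<Gamma>1 \<chi>1 W1 Y1 B1 where r: "(stepA A)\<^sup>*\<^sup>* (\<Gamma> \<union> (\<Union>w\<in>W. insert w ` Y w)) (\<Gamma>1 \<union> (\<Union>w\<in>W1. insert w ` Y1 w))"
     "\<Gamma> \<subseteq> \<Gamma>1" "config D \<Gamma>1 \<chi>1 W1 Y1 B1 (0 - 1)" "W1 = {}"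
     "\<forall>v\<in>vertices \<Gamma>. \<chi>1 v = \<chi> v" "\<forall>v\<in>vertices \<Gamma>1 - vertices \<Gamma>. \<chi>1 v \<le> D"
    using round[OF inf fA 0] by blast
  have "(\<Union>w\<in>W1. insert w ` Y1 w) = {}" using r(4) by simp
  then have "(stepA A)\<^sup>*\<^sup>* (\<Gamma> \<union> (\<Union>w\<in>W. insert w ` Y w)) \<Gamma>1" using r(1) by simp
  moreover have "proper_coloring_on \<Gamma>1 \<chi>1" "simplicial_complex \<Gamma>1" using r(3) unfolding config_def by auto
  ultimately show ?case using r(2,5,6) by blast
next
  case (Suc n)
  obtain \<Gamma>1 \<chi>1 W1 Y1 B1 where r: "(stepA A)\<^sup>*\<^sup>* (\<Gamma> \<union> (\<Union>w\<in>W. insert w ` Y w)) (\<Gamma>1 \<union> (\<Union>w\<in>W1. insert w ` Y1 w))"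
     "\<Gamma> \<subseteq> \<Gamma>1" "config D \<Gamma>1 \<chi>1 W1 Y1 B1 n"
     "\<forall>v\<in>vertices \<Gamma>. \<chi>1 v = \<chi> v" "\<forall>v\<in>vertices \<Gamma>1 - vertices \<Gamma>. \<chi>1 v \<le> D"
    using round[OF inf fA Suc.prems] by auto
  obtain \<Delta>' \<chi>' where d: "(stepA A)\<^sup>*\<^sup>* (\<Gamma>1 \<union> (\<Union>w\<in>W1. insert w ` Y1 w)) \<Delta>'"
     "\<Gamma>1 \<subseteq> \<Delta>'" "proper_coloring_on \<Delta>' \<chi>'" "\<forall>v\<in>vertices \<Gamma>1. \<chi>' v = \<chi>1 v"
     "\<forall>v\<in>vertices \<Delta>' - vertices \<Gamma>1. \<chi>' v \<le> D" "simplicial_complex \<Delta>'"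
    using Suc.IH[OF r(3)] by blast
  have VV: "vertices \<Gamma> \<subseteq> vertices \<Gamma>1" using vertices_mono[OF r(2)] .
  have "(stepA A)\<^sup>*\<^sup>* (\<Gamma> \<union> (\<Union>w\<in>W. insert w ` Y w)) \<Delta>'" using r(1) d(1) by (rule rtranclp_trans)
  moreover have "\<Gamma> \<subseteq> \<Delta>'" using r(2) d(2) by auto
  moreover have "\<forall>v\<in>vertices \<Gamma>. \<chi>' v = \<chi> v" using r(4) d(4) VV by auto
  moreover have "\<forall>v\<in>vertices \<Delta>' - vertices \<Gamma>. \<chi>' v \<le> D"
  proof
    fix v assume v: "v \<in> vertices \<Delta>' - vertices \<Gamma>"
    show "\<chi>' v \<le> D"
    proof (cases "v \<in> vertices \<Gamma>1")
      case True then show ?thesis using r(5) d(4) v by auto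
    next
      case False then show ?thesis using d(5) v by auto
    qed
  qed
  ultimately show ?case using d(3,6) by blast
qed


lemma sd_facet:
  fixes L :: "'a set set"
  assumes sc: "simplicial_complex L" and F: "F \<in> L" and mx: "\<forall>G\<in>L. F \<subseteq> G \<longrightarrow> G = F"
  shows "stellar_subdivision L F a = (L - {F}) \<union> insert a ` {H. H \<subset> F}"
proof -
  have dL: "\<And>G S. G \<in> L \<Longrightarrow> S \<subseteq> G \<Longrightarrow> S \<in> L" using sc unfolding simplicial_complex_def by blast
  have lk: "link L F = ({{}} :: 'a set set)"
  proof (rule set_eqI, rule iffI)
    fix G assume "G \<in> link L F"
    then have "F \<inter> G = {}" "F \<union> G \<in> L" unfolding link_def by auto
    then have "F \<union> G = F" using mx by auto
    then show "G \<in> {{}}" using \<open>F \<inter> G = {}\<close> by auto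
  next
    fix G :: "'a set" assume "G \<in> {{}}"
    then show "G \<in> link L F" using F dL[OF F, of "{}"] unfolding link_def by auto
  qed
  show ?thesis
  proof (rule set_eqI, rule iffI)
    fix X assume "X \<in> stellar_subdivision L F a"
    then consider "X \<in> L" "\<not> F \<subseteq> X" | A H G where "X = A \<union> H \<union> G" "A \<subseteq> {a}" "H \<subset> F" "G \<in> link L F"
      unfolding stellar_subdivision_def by blast
    then show "X \<in> (L - {F}) \<union> insert a ` {H. H \<subset> F}"
    proof cases
      case 1 then show ?thesis by auto
    next
      case 2
      then have X: "X = A \<union> H" using lk by auto
      show ?thesis
      proof (cases "A = {}")
        case True
        then have "X = H" using X by auto
        moreover have "H \<in> L" using dL[OF F] 2(3) by auto
        ultimately show ?thesis using 2(3) by auto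
      next
        case False
        then have "X = insert a H" using X 2(2) by auto
        then show ?thesis using 2(3) by auto
      qed
    qed
  next
    fix X assume X: "X \<in> (L - {F}) \<union> insert a ` {H. H \<subset> F}"
    show "X \<in> stellar_subdivision L F a"
    proof (cases "X \<in> L - {F}")
      case True
      then have "\<not> F \<subseteq> X" using mx by auto
      then show ?thesis using True unfolding stellar_subdivision_def by blast
    next
      case False
      then obtain H where H: "X = insert a H" "H \<subset> F" using X by auto
      have "X = {a} \<union> H \<union> {}" using H(1) by auto
      moreover have "{} \<in> link L F" using lk by auto
      ultimately show ?thesis using H(2) unfolding stellar_subdivision_def by blast
    qed
  qed
qed

lemma main_claim:
  fixes L K :: "'a set set" and \<kappa> :: "'a \<Rightarrow> nat"
  assumes inf: "infinite (UNIV::'a set)"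
  shows "finite A \<Longrightarrow> simplicial_complex L \<Longrightarrow> simplicial_complex K \<Longrightarrow> K \<subseteq> L
    \<Longrightarrow> (\<forall>\<sigma>\<in>L - K. card \<sigma> \<le> Suc n) \<Longrightarrow> proper_coloring_on K \<kappa>
    \<Longrightarrow> \<exists>L' \<kappa>'. (stepA A)\<^sup>*\<^sup>* L L' \<and> K \<subseteq> L' \<and> simplicial_complex L' \<and> proper_coloring_on L' \<kappa>'
        \<and> (\<forall>v\<in>vertices K. \<kappa>' v = \<kappa> v) \<and> (\<forall>v\<in>vertices L' - vertices K. \<kappa>' v \<le> n)"
proof (induction "card (L - K)" arbitrary: L A rule: less_induct)
  case less
  note fA = less.prems(1) and scL = less.prems(2) and scK = less.prems(3) and KL = less.prems(4)
    and bd = less.prems(5) and pK = less.prems(6)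
  have fL: "finite L" and ffL: "\<forall>F\<in>L. finite F" using scL unfolding simplicial_complex_def by auto
  have dK: "\<And>G S. G \<in> K \<Longrightarrow> S \<subseteq> G \<Longrightarrow> S \<in> K" using scK unfolding simplicial_complex_def by blast
  have dL: "\<And>G S. G \<in> L \<Longrightarrow> S \<subseteq> G \<Longrightarrow> S \<in> L" using scL unfolding simplicial_complex_def by blast
  show ?case
  proof (cases "L - K = {}")
    case True
    then have "L = K" using KL by auto
    then show ?thesis using scL pK by auto
  next
    case False
    obtain F where F: "F \<in> L - K" "\<forall>G\<in>L - K. F \<subseteq> G \<longrightarrow> F = G"
      using finite_has_maximal[OF _ False] fL by blast
    have mx: "\<forall>G\<in>L. F \<subseteq> G \<longrightarrow> G = F"
    proof (intro ballI impI)
      fix G assume G: "G \<in> L" "F \<subseteq> G"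
      have "G \<notin> K" using G(2) dK F(1) by blast
      then show "G = F" using F G by auto
    qed
    show ?thesis
    proof (cases "F = {}")
      case True
      then have L0: "\<forall>G\<in>L. G = {}" using mx by auto
      then have pL: "proper_coloring_on L \<kappa>" unfolding proper_coloring_on_def by auto
      have "vertices L = {}" using L0 unfolding vertices_def by auto
      then show ?thesis using pL scL KL by auto
    next
      case Fne: False
      define L0 where "L0 = L - {F}"
      have scL0: "simplicial_complex L0"
        unfolding simplicial_complex_def L0_def
      proof (intro conjI ballI allI impI)
        show "finite (L - {F})" using fL by auto
        fix G assume "G \<in> L - {F}"
        then show "finite G" using ffL by auto
      next
        fix G S assume G: "G \<in> L - {F}" and S: "S \<subseteq> G"
        have "S \<in> L" using dL G S by auto
        moreover have "S \<noteq> F" using G S mx by auto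
        ultimately show "S \<in> L - {F}" by auto
      qed
      have KL0: "K \<subseteq> L0" using KL F(1) unfolding L0_def by auto
      have lt: "card (L0 - K) < card (L - K)"
      proof -
        have "L0 - K = (L - K) - {F}" unfolding L0_def by auto
        moreover have "card (L - K) > 0" using F(1) fL by (auto simp: card_gt_0_iff)
        ultimately show ?thesis using F(1) fL by (simp add: card_Diff1_less)
      qed
      have bd0: "\<forall>\<sigma>\<in>L0 - K. card \<sigma> \<le> Suc n" using bd unfolding L0_def by auto
      obtain a where a: "a \<notin> A \<union> vertices L" using ex_new_if_finite[OF inf] fA finite_vertices[OF scL]
        by (meson finite_UnI)
      have fA': "finite (insert a A)" using fA by simp
      obtain L0' \<kappa>0 where ih: "(stepA (insert a A))\<^sup>*\<^sup>* L0 L0'" "K \<subseteq> L0'" "simplicial_complex L0'"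
        "proper_coloring_on L0' \<kappa>0" "\<forall>v\<in>vertices K. \<kappa>0 v = \<kappa> v" "\<forall>v\<in>vertices L0' - vertices K. \<kappa>0 v \<le> n"
        using less.hyps[OF lt fA' scL0 scK KL0 bd0 pK] by blast
      define X0 where "X0 = {H. H \<subset> F}"
      have sdL: "stellar_subdivision L F a = L0 \<union> insert a ` X0"
        unfolding L0_def X0_def using sd_facet[OF scL _ mx] F(1) by auto
      have st1: "stepA A L (L0 \<union> insert a ` X0)"
        unfolding stepA_def
      proof (intro exI conjI)
        show "F \<in> L" using F(1) by auto
        show "F \<noteq> {}" by (rule Fne)
        show "a \<notin> vertices L" "a \<notin> A" using a by auto
        show "L0 \<union> insert a ` X0 = stellar_subdivision L F a" using sdL by simp
      qed
      have aL0: "a \<notin> vertices L0" using a vertices_mono[of L0 L] unfolding L0_def by auto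
      have X0L0: "X0 \<subseteq> L0" unfolding X0_def L0_def using dL F(1) by auto
      have dX0: "dclosed X0" unfolding dclosed_def X0_def by auto
      have fF: "finite F" using ffL F(1) by auto
      have cF: "card F \<le> Suc n" using bd F(1) by auto
      have bX0: "\<forall>\<sigma>\<in>X0. finite \<sigma> \<and> card \<sigma> \<le> n"
      proof
        fix \<sigma> assume "\<sigma> \<in> X0"
        then have s: "\<sigma> \<subset> F" unfolding X0_def by auto
        then have "finite \<sigma>" "card \<sigma> < card F" using fF by (auto intro: finite_subset psubset_card_mono)
        then show "finite \<sigma> \<and> card \<sigma> \<le> n" using cF by auto
      qed
      obtain X' where X': "(stepA A)\<^sup>*\<^sup>* (L0 \<union> insert a ` X0) (L0' \<union> insert a ` X')" "X' \<subseteq> L0'" "dclosed X'"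
        "\<forall>\<sigma>\<in>X'. finite \<sigma> \<and> card \<sigma> \<le> n" "a \<notin> vertices L0'"
        using lift_steps[OF ih(1) aL0 X0L0 dX0 bX0 scL0] by blast
      have cfg: "config n L0' \<kappa>0 {a} (\<lambda>_. X') (\<lambda>_. {}) n"
        unfolding config_def using ih(3,4) X'(2-5) by auto
      obtain \<Delta>' \<chi>' where d: "(stepA A)\<^sup>*\<^sup>* (L0' \<union> (\<Union>w\<in>{a}. insert w ` X')) \<Delta>'"
        "L0' \<subseteq> \<Delta>'" "proper_coloring_on \<Delta>' \<chi>'" "\<forall>v\<in>vertices L0'. \<chi>' v = \<kappa>0 v"
        "\<forall>v\<in>vertices \<Delta>' - vertices L0'. \<chi>' v \<le> n" "simplicial_complex \<Delta>'"
        using cone_fill[OF inf fA cfg] by blast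
      have "(stepA A)\<^sup>*\<^sup>* L \<Delta>'"
      proof -
        have "(stepA A)\<^sup>*\<^sup>* L (L0 \<union> insert a ` X0)" using st1 by auto
        also have "(stepA A)\<^sup>*\<^sup>* \<dots> (L0' \<union> insert a ` X')" by (rule X'(1))
        also have "(stepA A)\<^sup>*\<^sup>* \<dots> \<Delta>'" using d(1) by simp
        finally show ?thesis .
      qed
      moreover have "K \<subseteq> \<Delta>'" using ih(2) d(2) by auto
      moreover have VK: "vertices K \<subseteq> vertices L0'" using vertices_mono[OF ih(2)] .
      moreover have "\<forall>v\<in>vertices K. \<chi>' v = \<kappa> v" using VK d(4) ih(5) by auto
      moreover have "\<forall>v\<in>vertices \<Delta>' - vertices K. \<chi>' v \<le> n"
      proof
        fix v assume v: "v \<in> vertices \<Delta>' - vertices K"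
        show "\<chi>' v \<le> n"
        proof (cases "v \<in> vertices L0'")
          case True then show ?thesis using d(4) ih(6) v by auto
        next
          case False then show ?thesis using d(5) v by auto
        qed
      qed
      ultimately show ?thesis using d(3,6) by blast
    qed
  qed
qed


theorem theorem3p1:
  fixes L K :: "'a set set" and \<kappa> :: "'a \<Rightarrow> nat" and m :: nat and d :: int
  assumes "infinite (UNIV :: 'a set)"
    and "simplicial_complex L" and "simplicial_complex K" and "K \<subseteq> L"
    and "L - K \<noteq> {}"
    and "d = Max (face_dim ` (L - K))"
    and "proper_m_coloring K m \<kappa>"
  shows "\<exists>L' \<kappa>'. stellar_step\<^sup>*\<^sup>* L L' \<and> K \<subseteq> L'
          \<and> proper_coloring_on L' \<kappa>'
          \<and> (\<forall>v\<in>vertices K. \<kappa>' v = \<kappa> v)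
          \<and> (\<forall>v\<in>vertices L'. int (\<kappa>' v) \<le> max (int m - 1) d)
          \<and> (\<forall>v\<in>vertices L' - vertices K. int (\<kappa>' v) \<le> d)"
proof -
  note inf = assms(1) and scL = assms(2) and scK = assms(3) and KL = assms(4) and ne = assms(5)
    and dd = assms(6)
  have pK: "proper_coloring_on K \<kappa>" and mK: "\<forall>v\<in>vertices K. \<kappa> v < m"
    using assms(7) unfolding proper_m_coloring_def by auto
  have fL: "finite L" and ffL: "\<forall>F\<in>L. finite F" using scL unfolding simplicial_complex_def by auto
  have dL: "\<And>G S. G \<in> L \<Longrightarrow> S \<subseteq> G \<Longrightarrow> S \<in> L" using scL unfolding simplicial_complex_def by blast
  have fLK: "finite (face_dim ` (L - K))" using fL by auto
  have dge: "\<And>\<sigma>. \<sigma> \<in> L - K \<Longrightarrow> face_dim \<sigma> \<le> d" using Max_ge[OF fLK] dd by auto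
  have Kb: "\<forall>v\<in>vertices K. int (\<kappa> v) \<le> int m - 1" using mK by auto
  show ?thesis
  proof (cases "d < 0")
    case True
    have Lsub: "\<And>\<sigma>. \<sigma> \<in> L \<Longrightarrow> \<sigma> \<noteq> {} \<Longrightarrow> \<sigma> \<in> K"
    proof (rule ccontr)
      fix \<sigma> assume s: "\<sigma> \<in> L" "\<sigma> \<noteq> {}" "\<sigma> \<notin> K"
      then have "face_dim \<sigma> \<le> d" using dge by auto
      moreover have "card \<sigma> > 0" using s ffL by (auto simp: card_gt_0_iff)
      ultimately show False using True unfolding face_dim_def by auto
    qed
    have VL: "vertices L \<subseteq> vertices K"
    proof
      fix v assume "v \<in> vertices L"
      then obtain \<sigma> where "v \<in> \<sigma>" "\<sigma> \<in> L" unfolding vertices_def by auto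
      then have "{v} \<in> L" using dL by auto
      then have "{v} \<in> K" using Lsub by auto
      then show "v \<in> vertices K" unfolding vertices_def by auto
    qed
    have "proper_coloring_on L \<kappa>" using pK Lsub unfolding proper_coloring_on_def by blast
    moreover have "\<forall>v\<in>vertices L. int (\<kappa> v) \<le> max (int m - 1) d" using VL Kb by fastforce
    moreover have "vertices L - vertices K = {}" using VL by auto
    ultimately show ?thesis using KL by (intro exI[of _ L] exI[of _ \<kappa>]) auto
  next
    case False
    define n where "n = nat d"
    have bd: "\<forall>\<sigma>\<in>L - K. card \<sigma> \<le> Suc n"
    proof
      fix \<sigma> assume "\<sigma> \<in> L - K"
      then have "int (card \<sigma>) - 1 \<le> d" using dge unfolding face_dim_def by auto
      then show "card \<sigma> \<le> Suc n" using False unfolding n_def by auto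
    qed
    obtain L' \<kappa>' where r: "(stepA {})\<^sup>*\<^sup>* L L'" "K \<subseteq> L'" "simplicial_complex L'" "proper_coloring_on L' \<kappa>'"
        "\<forall>v\<in>vertices K. \<kappa>' v = \<kappa> v" "\<forall>v\<in>vertices L' - vertices K. \<kappa>' v \<le> n"
      using main_claim[OF inf _ scL scK KL bd pK] by blast
    have nd: "\<forall>v\<in>vertices L' - vertices K. int (\<kappa>' v) \<le> d"
    proof
      fix v assume "v \<in> vertices L' - vertices K"
      then have "\<kappa>' v \<le> nat d" using r(6) unfolding n_def by auto
      then show "int (\<kappa>' v) \<le> d" using False by linarith
    qed
    have "\<forall>v\<in>vertices L'. int (\<kappa>' v) \<le> max (int m - 1) d"
    proof
      fix v assume v: "v \<in> vertices L'"
      show "int (\<kappa>' v) \<le> max (int m - 1) d"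
      proof (cases "v \<in> vertices K")
        case True then show ?thesis using r(5) Kb by auto
      next
        case False
        then have "int (\<kappa>' v) \<le> d" using nd v by blast
        then show ?thesis by linarith
      qed
    qed
    then show ?thesis using stepA_rtranclp[OF r(1)] r(2,4,5) nd by blast
  qed
qed

end
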